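(* Let $C$ be a single-qubit Pauli-Square-Root Clifford of order $2$ (i.e. $C^2=I$) and let $|\psi\rangle$ be a $+1$ eigenstate of $C$. Define the twirling map $\mathcal{T}_C(\rho)=\frac12\big(\rho+C\rho C^{\dagger}\big)$. Then for any single-qubit quantum channel $\mathcal{E}$, $$\mathcal{T}_C\circ\mathcal{E}(|\psi\rangle\langle\psi|)=(1-p)|\psi\rangle\langle\psi|+p\,P|\psi\rangle\langle\psi|P^{\dagger}$$ for some Pauli $P$ and some $0\le p\le 1$.
   Context: Paulis are tensor products of $I,X,Y,Z$ times a phase in $\{\pm1,\pm i\}$; a Clifford maps Paulis to Paulis under conjugation. A Pauli-Square-Root Clifford (PSC) is a Clifford that is not a Pauli and whose square is a Pauli. *)

theory Defs
  imports "Jordan_Normal_Form.Matrix" "HOL-Library.Complex_Order"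
begin

definition dag :: "complex mat \<Rightarrow> complex mat" where
  "dag A = mat (dim_col A) (dim_row A) (\<lambda>(i,j). cnj (A $$ (j,i)))"

definition pauliX :: "complex mat" where
  "pauliX = mat_of_rows_list 2 [[0,1],[1,0]]"
definition pauliY :: "complex mat" where
  "pauliY = mat_of_rows_list 2 [[0,-\<i>],[\<i>,0]]"
definition pauliZ :: "complex mat" where
  "pauliZ = mat_of_rows_list 2 [[1,0],[0,-1]]"

definition is_pauli :: "complex mat \<Rightarrow> bool" where
  "is_pauli P \<longleftrightarrow> (\<exists>c Q. c \<in> {1, -1, \<i>, -\<i>} \<and> Q \<in> {1\<^sub>m 2, pauliX, pauliY, pauliZ} \<and> P = c \<cdot>\<^sub>m Q)"

definition unitary2 :: "complex mat \<Rightarrow> bool" where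
  "unitary2 U \<longleftrightarrow> U \<in> carrier_mat 2 2 \<and> U * dag U = 1\<^sub>m 2 \<and> dag U * U = 1\<^sub>m 2"

definition is_clifford :: "complex mat \<Rightarrow> bool" where
  "is_clifford U \<longleftrightarrow> unitary2 U \<and> (\<forall>P. is_pauli P \<longrightarrow> is_pauli (U * P * dag U))"

definition is_PSC :: "complex mat \<Rightarrow> bool" where
  "is_PSC C \<longleftrightarrow> is_clifford C \<and> \<not> is_pauli C \<and> is_pauli (C * C)"

definition tr2 :: "complex mat \<Rightarrow> complex" where
  "tr2 A = A $$ (0,0) + A $$ (1,1)"

definition psd :: "nat \<Rightarrow> complex mat \<Rightarrow> bool" where
  "psd n M \<longleftrightarrow> M \<in> carrier_mat n n \<and>
     (\<forall>v \<in> carrier_vec n. (\<Sum>i<n. \<Sum>j<n. cnj (v $ i) * M $$ (i,j) * v $ j) \<ge> 0)"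

text \<open>(id_n \<otimes> E) applied to a 2n x 2n matrix viewed as an n x n array of 2 x 2 blocks.\<close>
definition ampl :: "nat \<Rightarrow> (complex mat \<Rightarrow> complex mat) \<Rightarrow> complex mat \<Rightarrow> complex mat" where
  "ampl n E M = mat (2*n) (2*n) (\<lambda>(i,j).
      E (mat 2 2 (\<lambda>(a,b). M $$ (2*(i div 2) + a, 2*(j div 2) + b))) $$ (i mod 2, j mod 2))"

definition is_channel :: "(complex mat \<Rightarrow> complex mat) \<Rightarrow> bool" where
  "is_channel E \<longleftrightarrow>
     (\<forall>A \<in> carrier_mat 2 2. E A \<in> carrier_mat 2 2) \<and>
     (\<forall>A \<in> carrier_mat 2 2. \<forall>B \<in> carrier_mat 2 2. \<forall>c::complex.
         E (c \<cdot>\<^sub>m A + B) = c \<cdot>\<^sub>m E A + E B) \<and>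
     (\<forall>A \<in> carrier_mat 2 2. tr2 (E A) = tr2 A) \<and>
     (\<forall>n M. psd (2*n) M \<longrightarrow> psd (2*n) (ampl n E M))"

definition ketbra :: "complex vec \<Rightarrow> complex mat" where
  "ketbra v = mat (dim_vec v) (dim_vec v) (\<lambda>(i,j). v $ i * cnj (v $ j))"

definition is_state :: "complex vec \<Rightarrow> bool" where
  "is_state v \<longleftrightarrow> v \<in> carrier_vec 2 \<and> (\<Sum>i<2. (cmod (v $ i))\<^sup>2) = 1"

definition twirl :: "complex mat \<Rightarrow> complex mat \<Rightarrow> complex mat" where
  "twirl C \<rho> = (1/2 :: complex) \<cdot>\<^sub>m (\<rho> + C * \<rho> * dag C)"

end

theory Submission
  imports Defs
begin

lemma sum2: "(\<Sum>i<2. f i) = f 0 + f (1::nat)"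
  by (simp add: numeral_2_eq_2)

lemma m2: "A \<in> carrier_mat 2 2 \<Longrightarrow> B \<in> carrier_mat 2 2 \<Longrightarrow>
  (A*B) $$ (0,0) = A$$(0,0)*B$$(0,0) + A$$(0,1)*B$$(1,0) \<and>
  (A*B) $$ (0,1) = A$$(0,0)*B$$(0,1) + A$$(0,1)*B$$(1,1) \<and>
  (A*B) $$ (1,0) = A$$(1,0)*B$$(0,0) + A$$(1,1)*B$$(1,0) \<and>
  (A*B) $$ (1,1) = A$$(1,0)*B$$(0,1) + A$$(1,1)*B$$(1,1)"
  by (auto simp: scalar_prod_def numeral_2_eq_2)

lemma e2: "A \<in> carrier_mat 2 2 \<Longrightarrow> B \<in> carrier_mat 2 2 \<Longrightarrow> A$$(0,0) = B$$(0,0) \<Longrightarrow> A$$(0,1) = B$$(0,1)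
  \<Longrightarrow> A$$(1,0) = B$$(1,0) \<Longrightarrow> A$$(1,1) = B$$(1,1) \<Longrightarrow> A = B"
  apply (rule eq_matI) apply (auto simp: numeral_2_eq_2 less_Suc_eq)
  done

lemma dag_carrier: "A \<in> carrier_mat 2 2 \<Longrightarrow> dag A \<in> carrier_mat 2 2"
  by (simp add: dag_def)

lemma dag_idx: "A \<in> carrier_mat 2 2 \<Longrightarrow> i < 2 \<Longrightarrow> j < 2 \<Longrightarrow> dag A $$ (i,j) = cnj (A $$ (j,i))"
  by (simp add: dag_def)

lemma kb_carrier: "v \<in> carrier_vec 2 \<Longrightarrow> ketbra v \<in> carrier_mat 2 2"
  by (simp add: ketbra_def)

lemma kb_idx: "v \<in> carrier_vec 2 \<Longrightarrow> i < 2 \<Longrightarrow> j < 2 \<Longrightarrow> ketbra v $$ (i,j) = v $ i * cnj (v $ j)"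
  by (simp add: ketbra_def)

lemma mv2: "A \<in> carrier_mat 2 2 \<Longrightarrow> v \<in> carrier_vec 2 \<Longrightarrow>
   (A *\<^sub>v v) $ 0 = A$$(0,0) * v$0 + A$$(0,1) * v$1 \<and> (A *\<^sub>v v) $ 1 = A$$(1,0) * v$0 + A$$(1,1) * v$1"
  by (auto simp: scalar_prod_def numeral_2_eq_2)

lemma kb_mult: assumes "P \<in> carrier_mat 2 2" "v \<in> carrier_vec 2"
  shows "ketbra (P *\<^sub>v v) = P * ketbra v * dag P"
proof -
  have c: "P *\<^sub>v v \<in> carrier_vec 2" using assms by simp
  have K: "ketbra v \<in> carrier_mat 2 2" using assms(2) by (rule kb_carrier)
  have PK: "P * ketbra v \<in> carrier_mat 2 2" using assms K by simp
  have D: "dag P \<in> carrier_mat 2 2" using assms(1) by (rule dag_carrier)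
  have PKD: "P * ketbra v * dag P \<in> carrier_mat 2 2" using PK D by simp
  note X = m2[OF PK D] m2[OF assms(1) K] mv2[OF assms] kb_idx[OF c] kb_idx[OF assms(2)] dag_idx[OF assms(1)]
  show ?thesis
    apply (rule e2[OF kb_carrier[OF c] PKD])
    by (simp_all only: X, simp_all add: algebra_simps)
qed

lemma psd_kb: assumes "v \<in> carrier_vec 2" shows "psd 2 (ketbra v)"
  unfolding psd_def
proof (intro conjI ballI)
  show "ketbra v \<in> carrier_mat 2 2" using assms by (rule kb_carrier)
  fix u :: "complex vec" assume "u \<in> carrier_vec 2"
  define x where "x = cnj (u$0) * v$0 + cnj (u$1) * v$1"
  have "(\<Sum>i<2. \<Sum>j<2. cnj (u $ i) * ketbra v $$ (i,j) * u $ j) = x * cnj x"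
    using assms by (simp add: sum2 kb_idx x_def algebra_simps)
  also have "\<dots> = complex_of_real ((cmod x)^2)" by (metis complex_norm_square)
  also have "\<dots> \<ge> 0" by (simp add: less_eq_complex_def)
  finally show "(\<Sum>i<2. \<Sum>j<2. cnj (u $ i) * ketbra v $$ (i,j) * u $ j) \<ge> 0" .
qed

lemma ampl1: assumes "is_channel E" "A \<in> carrier_mat 2 2" shows "ampl 1 E A = E A"
proof -
  have EA: "E A \<in> carrier_mat 2 2" using assms unfolding is_channel_def by blast
  have inner: "mat 2 2 (($$) A) = A"
    using assms by (intro eq_matI) auto
  show ?thesis
    unfolding ampl_def using EA by (intro eq_matI) (auto simp: inner)
qed

lemma psd_use: assumes "psd 2 S" "v \<in> carrier_vec 2"
  shows "0 \<le> S$$(0,0) * ketbra v $$ (0,0) + S$$(0,1) * ketbra v $$ (1,0) + S$$(1,0) * ketbra v $$ (0,1) + S$$(1,1) * ketbra v $$ (1,1)"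
proof -
  have "0 \<le> (\<Sum>i<2. \<Sum>j<2. cnj (v $ i) * S $$ (i,j) * v $ j)" using assms unfolding psd_def by blast
  also have "\<dots> = S$$(0,0) * ketbra v $$ (0,0) + S$$(0,1) * ketbra v $$ (1,0) + S$$(1,0) * ketbra v $$ (0,1) + S$$(1,1) * ketbra v $$ (1,1)"
    using assms(2) by (simp add: sum2 kb_idx algebra_simps)
  finally show ?thesis .
qed

lemma twirl_entries:
  fixes z w v s00 s01 s10 s11 a b :: complex
  assumes nz: "z*z + w*v = 1"
  and ha: "a = s00 * ((1+z)/2) + s01 * (v/2) + s10 * (w/2) + s11 * ((1-z)/2)"
  and hb: "b = s00 * ((1-z)/2) + s01 * (-v/2) + s10 * (-w/2) + s11 * ((1+z)/2)"
  shows "(1/2) * (s00 + ((z*s00 + w*s10)*z + (z*s01 + w*s11)*v)) = a * ((1+z)/2) + b * ((1-z)/2)"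
    and "(1/2) * (s01 + ((z*s00 + w*s10)*w + (z*s01 + w*s11)*(-z))) = a * (w/2) + b * (-w/2)"
    and "(1/2) * (s10 + ((v*s00 - z*s10)*z + (v*s01 - z*s11)*v)) = a * (v/2) + b * (-v/2)"
    and "(1/2) * (s11 + ((v*s00 - z*s10)*w + (v*s01 - z*s11)*(-z))) = a * ((1-z)/2) + b * ((1+z)/2)"
proof -
  have z0: "z*z + w*v - 1 = 0" using nz by simp
  have "(1/2) * (s00 + ((z*s00 + w*s10)*z + (z*s01 + w*s11)*v)) - (a * ((1+z)/2) + b * ((1-z)/2)) = (s11/2) * (z*z + w*v - 1)"
    unfolding ha hb by (simp add: field_simps)
  then show "(1/2) * (s00 + ((z*s00 + w*s10)*z + (z*s01 + w*s11)*v)) = a * ((1+z)/2) + b * ((1-z)/2)"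
    unfolding z0 by simp
  have "(1/2) * (s01 + ((z*s00 + w*s10)*w + (z*s01 + w*s11)*(-z))) - (a * (w/2) + b * (-w/2)) = (-s01/2) * (z*z + w*v - 1)"
    unfolding ha hb by (simp add: field_simps)
  then show "(1/2) * (s01 + ((z*s00 + w*s10)*w + (z*s01 + w*s11)*(-z))) = a * (w/2) + b * (-w/2)"
    unfolding z0 by simp
  have "(1/2) * (s10 + ((v*s00 - z*s10)*z + (v*s01 - z*s11)*v)) - (a * (v/2) + b * (-v/2)) = (-s10/2) * (z*z + w*v - 1)"
    unfolding ha hb by (simp add: field_simps)
  then show "(1/2) * (s10 + ((v*s00 - z*s10)*z + (v*s01 - z*s11)*v)) = a * (v/2) + b * (-v/2)"
    unfolding z0 by simp
  have "(1/2) * (s11 + ((v*s00 - z*s10)*w + (v*s01 - z*s11)*(-z))) - (a * ((1-z)/2) + b * ((1+z)/2)) = (s00/2) * (z*z + w*v - 1)"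
    unfolding ha hb by (simp add: field_simps)
  then show "(1/2) * (s11 + ((v*s00 - z*s10)*w + (v*s01 - z*s11)*(-z))) = a * ((1-z)/2) + b * ((1+z)/2)"
    unfolding z0 by simp
qed

lemma h1_aux: fixes z w a b ca cb :: complex
  assumes "z*a + w*b = a" "w*ca - z*cb = cb" "a*ca + b*cb = 1"
  shows "2*(a*ca) = 1 + z"
proof -
  have e1: "z*(a*ca) + w*(b*ca) = a*ca" using assms(1) by (metis distrib_right mult.assoc)
  have e2: "w*(b*ca) - z*(b*cb) = b*cb" using assms(2) by (metis mult.commute mult.left_commute right_diff_distrib)
  have "z = z*(a*ca + b*cb)" using assms(3) by simp
  also have "\<dots> = z*(a*ca) + z*(b*cb)" by (simp add: algebra_simps)
  also have "\<dots> = a*ca - b*cb" using e1 e2 by (simp add: algebra_simps)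
  finally have "z = a*ca - b*cb" .
  moreover have bc: "b*cb = 1 - a*ca" using assms(3) by (simp add: eq_diff_eq add.commute)
  ultimately have "z = 2*(a*ca) - 1" by simp
  then show ?thesis by simp
qed
lemma h2_aux: fixes z w a b cb :: complex
  assumes "z*a + w*b = a" "2*(b*cb) = 1 - z"
  shows "(1 - z) * (2*(a*cb)) = (1 - z) * w"
proof -
  have e1: "z*(a*cb) + w*(b*cb) = a*cb" using assms(1) by (metis distrib_right mult.assoc)
  have "(1 - z) * (2*(a*cb)) = 2*(a*cb - z*(a*cb))" by (simp add: algebra_simps)
  also have "\<dots> = 2*(w*(b*cb))" by (metis e1 add_diff_cancel_left')
  also have "\<dots> = w * (2*(b*cb))" by (simp add: algebra_simps)
  also have "\<dots> = (1 - z) * w" using assms(2) by simp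
  finally show ?thesis .
qed
lemma h4_aux: fixes x y z :: complex
  assumes "2*x = 1+z" "x + y = 1" shows "2*y = 1 - z"
proof -
  have "y = 1 - x" using assms(2) by (simp add: eq_diff_eq add.commute)
  then have "2*y = 2 - 2*x" by (simp add: right_diff_distrib)
  then show ?thesis using assms(1) by simp
qed
lemma ixi: "\<i> * x * \<i> = - x"
  by (metis mult.assoc mult.commute complex_i_mult_minus)

lemma core:
  fixes z w :: complex
  assumes Cc: "C \<in> carrier_mat 2 2" and c00: "C$$(0,0) = z" and c01: "C$$(0,1) = w" and c10: "C$$(1,0) = cnj w"
    and c11: "C$$(1,1) = -z" and zr: "cnj z = z" and nz: "z*z + w*cnj w = 1"
    and Kc: "K \<in> carrier_mat 2 2" and k00: "K$$(0,0) = (1+z)/2" and k01: "K$$(0,1) = w/2"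
    and k10: "K$$(1,0) = cnj w/2" and k11: "K$$(1,1) = (1-z)/2"
    and Rc: "R \<in> carrier_mat 2 2" and r00: "R$$(0,0) = (1-z)/2" and r01: "R$$(0,1) = -w/2"
    and r10: "R$$(1,0) = -cnj w/2" and r11: "R$$(1,1) = (1+z)/2"
    and Sc: "S \<in> carrier_mat 2 2" and tr: "tr2 S = 1"
    and apos: "0 \<le> S$$(0,0) * K $$ (0,0) + S$$(0,1) * K $$ (1,0) + S$$(1,0) * K $$ (0,1) + S$$(1,1) * K $$ (1,1)"
    and bpos: "0 \<le> S$$(0,0) * R $$ (0,0) + S$$(0,1) * R $$ (1,0) + S$$(1,0) * R $$ (0,1) + S$$(1,1) * R $$ (1,1)"
  shows "\<exists>p::real. 0 \<le> p \<and> p \<le> 1 \<and> twirl C S = complex_of_real (1 - p) \<cdot>\<^sub>m K + complex_of_real p \<cdot>\<^sub>m R"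
proof -
  define a where "a = S$$(0,0) * K $$ (0,0) + S$$(0,1) * K $$ (1,0) + S$$(1,0) * K $$ (0,1) + S$$(1,1) * K $$ (1,1)"
  define b where "b = S$$(0,0) * R $$ (0,0) + S$$(0,1) * R $$ (1,0) + S$$(1,0) * R $$ (0,1) + S$$(1,1) * R $$ (1,1)"
  have ab: "a + b = 1" using tr unfolding a_def b_def tr2_def k00 k01 k10 k11 r00 r01 r10 r11
    by (simp add: field_simps) (metis distrib_right mult_1)
  have b0: "Im b = 0" "Re b \<ge> 0" using bpos unfolding b_def[symmetric] by (auto simp: less_eq_complex_def)
  have a0: "Re a \<ge> 0" using apos unfolding a_def[symmetric] by (auto simp: less_eq_complex_def)
  have bre: "complex_of_real (Re b) = b" using b0 by (simp add: complex_eq_iff)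
  have are: "complex_of_real (1 - Re b) = a" using ab bre by (metis diff_eq_eq of_real_1 of_real_diff add.commute)
  have p1: "Re b \<le> 1" using a0 ab by (metis are diff_ge_0_iff_ge Re_complex_of_real)
  have D: "dag C \<in> carrier_mat 2 2" using Cc by (rule dag_carrier)
  have CS: "C * S \<in> carrier_mat 2 2" using Cc Sc by simp
  have CSD: "C * S * dag C \<in> carrier_mat 2 2" using CS D by simp
  have T: "twirl C S \<in> carrier_mat 2 2" unfolding twirl_def using CSD Sc by simp
  have RHS: "complex_of_real (1 - Re b) \<cdot>\<^sub>m K + complex_of_real (Re b) \<cdot>\<^sub>m R \<in> carrier_mat 2 2"
    using Kc Rc by simp
  have dg: "dag C $$ (0,0) = z" "dag C $$ (0,1) = w" "dag C $$ (1,0) = cnj w" "dag C $$ (1,1) = -z"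
    using dag_idx[OF Cc, of 0 0] dag_idx[OF Cc, of 0 1] dag_idx[OF Cc, of 1 0] dag_idx[OF Cc, of 1 1] c00 c01 c10 c11 zr by simp_all
  note TE = twirl_entries[OF nz a_def[unfolded k00 k01 k10 k11] b_def[unfolded r00 r01 r10 r11]]
  have tw: "twirl C S $$ (i,j) = (1/2) * (S $$ (i,j) + (C * S * dag C) $$ (i,j))" if "i < 2" "j < 2" for i j
    unfolding twirl_def using that carrier_matD[OF Sc] carrier_matD[OF CSD] by simp
  have rh: "(a \<cdot>\<^sub>m K + b \<cdot>\<^sub>m R) $$ (i,j) = a * K $$ (i,j) + b * R $$ (i,j)" if "i < 2" "j < 2" for i j
    using that Kc Rc by simp
  have m1: "(C * S * dag C) $$ (0,0) = (z*S$$(0,0) + w*S$$(1,0))*z + (z*S$$(0,1) + w*S$$(1,1))*cnj w"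
    "(C * S * dag C) $$ (0,1) = (z*S$$(0,0) + w*S$$(1,0))*w + (z*S$$(0,1) + w*S$$(1,1))*(-z)"
    "(C * S * dag C) $$ (1,0) = (cnj w*S$$(0,0) - z*S$$(1,0))*z + (cnj w*S$$(0,1) - z*S$$(1,1))*cnj w"
    "(C * S * dag C) $$ (1,1) = (cnj w*S$$(0,0) - z*S$$(1,0))*w + (cnj w*S$$(0,1) - z*S$$(1,1))*(-z)"
    using m2[OF CS D] m2[OF Cc Sc] c00 c01 c10 c11 dg by simp_all
  have "twirl C S = a \<cdot>\<^sub>m K + b \<cdot>\<^sub>m R"
  proof (rule e2[OF T])
    show "a \<cdot>\<^sub>m K + b \<cdot>\<^sub>m R \<in> carrier_mat 2 2" using Kc Rc by simp
    show "twirl C S $$ (0,0) = (a \<cdot>\<^sub>m K + b \<cdot>\<^sub>m R) $$ (0,0)"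
    proof -
      have "twirl C S $$ (0,0) = (1/2)*(S$$(0,0) + (C * S * dag C)$$(0,0))" by (rule tw) simp_all
      also have "\<dots> = a * K$$(0,0) + b * R$$(0,0)" unfolding m1(1) k00 r00 by (rule TE(1))
      also have "\<dots> = (a \<cdot>\<^sub>m K + b \<cdot>\<^sub>m R) $$ (0,0)" by (rule rh[symmetric]) simp_all
      finally show ?thesis .
    qed
    show "twirl C S $$ (0,1) = (a \<cdot>\<^sub>m K + b \<cdot>\<^sub>m R) $$ (0,1)"
    proof -
      have "twirl C S $$ (0,1) = (1/2)*(S$$(0,1) + (C * S * dag C)$$(0,1))" by (rule tw) simp_all
      also have "\<dots> = a * K$$(0,1) + b * R$$(0,1)" unfolding m1(2) k01 r01 by (rule TE(2))
      also have "\<dots> = (a \<cdot>\<^sub>m K + b \<cdot>\<^sub>m R) $$ (0,1)" by (rule rh[symmetric]) simp_all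
      finally show ?thesis .
    qed
    show "twirl C S $$ (1,0) = (a \<cdot>\<^sub>m K + b \<cdot>\<^sub>m R) $$ (1,0)"
    proof -
      have "twirl C S $$ (1,0) = (1/2)*(S$$(1,0) + (C * S * dag C)$$(1,0))" by (rule tw) simp_all
      also have "\<dots> = a * K$$(1,0) + b * R$$(1,0)" unfolding m1(3) k10 r10 by (rule TE(3))
      also have "\<dots> = (a \<cdot>\<^sub>m K + b \<cdot>\<^sub>m R) $$ (1,0)" by (rule rh[symmetric]) simp_all
      finally show ?thesis .
    qed
    show "twirl C S $$ (1,1) = (a \<cdot>\<^sub>m K + b \<cdot>\<^sub>m R) $$ (1,1)"
    proof -
      have "twirl C S $$ (1,1) = (1/2)*(S$$(1,1) + (C * S * dag C)$$(1,1))" by (rule tw) simp_all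
      also have "\<dots> = a * K$$(1,1) + b * R$$(1,1)" unfolding m1(4) k11 r11 by (rule TE(4))
      also have "\<dots> = (a \<cdot>\<^sub>m K + b \<cdot>\<^sub>m R) $$ (1,1)" by (rule rh[symmetric]) simp_all
      finally show ?thesis .
    qed
  qed
  then show ?thesis using are bre b0 p1 by (intro exI[of _ "Re b"]) simp
qed

lemma conj2: assumes Pc: "P \<in> carrier_mat 2 2" and Kc: "K \<in> carrier_mat 2 2"
  shows "(P*K*dag P)$$(0,0) = (P$$(0,0)*K$$(0,0) + P$$(0,1)*K$$(1,0))*cnj (P$$(0,0)) + (P$$(0,0)*K$$(0,1) + P$$(0,1)*K$$(1,1))*cnj (P$$(0,1))"
    "(P*K*dag P)$$(0,1) = (P$$(0,0)*K$$(0,0) + P$$(0,1)*K$$(1,0))*cnj (P$$(1,0)) + (P$$(0,0)*K$$(0,1) + P$$(0,1)*K$$(1,1))*cnj (P$$(1,1))"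
    "(P*K*dag P)$$(1,0) = (P$$(1,0)*K$$(0,0) + P$$(1,1)*K$$(1,0))*cnj (P$$(0,0)) + (P$$(1,0)*K$$(0,1) + P$$(1,1)*K$$(1,1))*cnj (P$$(0,1))"
    "(P*K*dag P)$$(1,1) = (P$$(1,0)*K$$(0,0) + P$$(1,1)*K$$(1,0))*cnj (P$$(1,0)) + (P$$(1,0)*K$$(0,1) + P$$(1,1)*K$$(1,1))*cnj (P$$(1,1))"
proof -
  have D: "dag P \<in> carrier_mat 2 2" using Pc by (rule dag_carrier)
  have PK: "P * K \<in> carrier_mat 2 2" using Pc Kc by simp
  note X = m2[OF PK D] m2[OF Pc Kc] dag_idx[OF Pc, of 0 0] dag_idx[OF Pc, of 0 1] dag_idx[OF Pc, of 1 0] dag_idx[OF Pc, of 1 1]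
  show "(P*K*dag P)$$(0,0) = (P$$(0,0)*K$$(0,0) + P$$(0,1)*K$$(1,0))*cnj (P$$(0,0)) + (P$$(0,0)*K$$(0,1) + P$$(0,1)*K$$(1,1))*cnj (P$$(0,1))"
    "(P*K*dag P)$$(0,1) = (P$$(0,0)*K$$(0,0) + P$$(0,1)*K$$(1,0))*cnj (P$$(1,0)) + (P$$(0,0)*K$$(0,1) + P$$(0,1)*K$$(1,1))*cnj (P$$(1,1))"
    "(P*K*dag P)$$(1,0) = (P$$(1,0)*K$$(0,0) + P$$(1,1)*K$$(1,0))*cnj (P$$(0,0)) + (P$$(1,0)*K$$(0,1) + P$$(1,1)*K$$(1,1))*cnj (P$$(0,1))"
    "(P*K*dag P)$$(1,1) = (P$$(1,0)*K$$(0,0) + P$$(1,1)*K$$(1,0))*cnj (P$$(1,0)) + (P$$(1,0)*K$$(0,1) + P$$(1,1)*K$$(1,1))*cnj (P$$(1,1))"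
    using X by simp_all
qed

lemma pauli_ent:
  "pauliX$$(0,0) = 0" "pauliX$$(0,1) = 1" "pauliX$$(1,0) = 1" "pauliX$$(1,1) = 0"
  "pauliY$$(0,0) = 0" "pauliY$$(0,1) = -\<i>" "pauliY$$(1,0) = \<i>" "pauliY$$(1,1) = 0"
  "pauliZ$$(0,0) = 1" "pauliZ$$(0,1) = 0" "pauliZ$$(1,0) = 0" "pauliZ$$(1,1) = -1"
  by (simp_all add: pauliX_def pauliY_def pauliZ_def mat_of_rows_list_def)

lemma pauli_carrier: "pauliX \<in> carrier_mat 2 2" "pauliY \<in> carrier_mat 2 2" "pauliZ \<in> carrier_mat 2 2"
  by (auto intro!: carrier_matI simp: pauliX_def pauliY_def pauliZ_def mat_of_rows_list_def)

lemma one_smult2: "(1::complex) \<cdot>\<^sub>m A = A"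
  by (rule eq_matI) auto

lemma pauli_basic: "is_pauli pauliX" "is_pauli pauliY" "is_pauli pauliZ"
  unfolding is_pauli_def
    apply (rule exI[of _ 1], rule exI[of _ pauliX], simp add: one_smult2)
    apply (rule exI[of _ 1], rule exI[of _ pauliY], simp add: one_smult2)
    apply (rule exI[of _ 1], rule exI[of _ pauliZ], simp add: one_smult2)
    done

theorem proposition4:
  fixes C :: "complex mat" and \<psi> :: "complex vec" and E :: "complex mat \<Rightarrow> complex mat"
  assumes "is_PSC C"
    and "C * C = 1\<^sub>m 2"
    and "is_state \<psi>"
    and "C *\<^sub>v \<psi> = \<psi>"
    and "is_channel E"
  shows "\<exists>P (p::real). is_pauli P \<and> 0 \<le> p \<and> p \<le> 1 \<and>
           twirl C (E (ketbra \<psi>)) =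
             complex_of_real (1 - p) \<cdot>\<^sub>m ketbra \<psi> + complex_of_real p \<cdot>\<^sub>m (P * ketbra \<psi> * dag P)"
proof -
  from assms(1) have cl: "is_clifford C" and np: "\<not> is_pauli C" unfolding is_PSC_def by auto
  from cl have Cc: "C \<in> carrier_mat 2 2" and dC: "dag C * C = 1\<^sub>m 2"
    and cliff: "\<forall>P. is_pauli P \<longrightarrow> is_pauli (C * P * dag C)"
    unfolding is_clifford_def unitary2_def by auto
  have D: "dag C \<in> carrier_mat 2 2" using Cc by (rule dag_carrier)
  have dagC: "dag C = C"
  proof -
    have "dag C = dag C * 1\<^sub>m 2" using D by simp
    also have "\<dots> = dag C * (C * C)" using assms(2) by simp
    also have "\<dots> = (dag C * C) * C" using assoc_mult_mat[OF D Cc Cc] by simp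
    also have "\<dots> = C" using dC Cc by simp
    finally show ?thesis .
  qed
  define z where "z = C$$(0,0)"
  define w where "w = C$$(0,1)"
  define d where "d = C$$(1,1)"
  have c00: "C$$(0,0) = z" and c01: "C$$(0,1) = w" and c11': "C$$(1,1) = d" by (simp_all add: z_def w_def d_def)
  have c10: "C$$(1,0) = cnj w" using dag_idx[OF Cc, of 1 0] dagC c01 by simp
  have zr: "cnj z = z" using dag_idx[OF Cc, of 0 0] dagC c00 by simp
  have CC: "(C*C)$$(0,0) = 1" "(C*C)$$(0,1) = 0" "(C*C)$$(1,1) = 1" using assms(2) by simp_all
  have nz: "z*z + w*cnj w = 1" and zd: "z*w + w*d = 0" and dd: "cnj w * w + d*d = 1"
    using CC m2[OF Cc Cc] c00 c01 c10 c11' by simp_all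
  have dz: "d = -z"
  proof (rule ccontr)
    assume ne: "d \<noteq> -z"
    have zd0: "z + d \<noteq> 0" using ne by (metis add.commute neg_eq_iff_add_eq_0)
    from zd have "w * (z + d) = 0" by (simp add: algebra_simps)
    with zd0 have w0: "w = 0" by simp
    from nz w0 have z1: "z*z = 1" by simp
    from dd w0 have d1: "d*d = 1" by simp
    have "(z - d)*(z + d) = 0" using z1 d1 by (simp add: algebra_simps)
    with zd0 have zd': "z = d" by simp
    have "(z - 1)*(z + 1) = 0" using z1 by (simp add: algebra_simps)
    hence zpm: "z = 1 \<or> z = -1" by (metis eq_iff_diff_eq_0 eq_neg_iff_add_eq_0 mult_eq_0_iff)
    have Cz: "C = z \<cdot>\<^sub>m 1\<^sub>m 2"
      by (rule e2[OF Cc]) (use w0 zd' c00 c01 c10 c11' in simp_all)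
    have "is_pauli C" unfolding is_pauli_def
      apply (rule exI[of _ z], rule exI[of _ "1\<^sub>m 2"]) using zpm Cz by auto
    with np show False by simp
  qed
  have c11: "C$$(1,1) = -z" using c11' dz by simp
  have "is_pauli (C * pauliZ * dag C)" using cliff pauli_basic(3) by blast
  then obtain c Q where cQ: "c \<in> {1,-1,\<i>,-\<i>}" "Q \<in> {1\<^sub>m 2, pauliX, pauliY, pauliZ}"
     "C * pauliZ * dag C = c \<cdot>\<^sub>m Q" unfolding is_pauli_def by blast
  have CZ: "C * pauliZ \<in> carrier_mat 2 2" using Cc pauli_carrier(3) by simp
  have M01: "(C * pauliZ * dag C)$$(0,1) = 2*z*w" and M10: "(C * pauliZ * dag C)$$(1,0) = 2*z*cnj w"
    using m2[OF CZ D] m2[OF Cc pauli_carrier(3)] pauli_ent dagC c00 c01 c10 c11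
    by (simp_all add: algebra_simps)
  have key: "z = 0 \<or> cnj w = -w \<or> cnj w = w"
  proof -
    have Qc: "Q \<in> carrier_mat 2 2" using cQ(2) pauli_carrier by auto
    have q01: "c * Q$$(0,1) = 2*z*w" using M01 cQ(3) Qc by simp
    have q10: "c * Q$$(1,0) = 2*z*cnj w" using M10 cQ(3) Qc by simp
    from cQ(2) consider "Q = 1\<^sub>m 2" | "Q = pauliX" | "Q = pauliY" | "Q = pauliZ" by blast
    then show ?thesis
    proof cases
      case 1 then show ?thesis using q01 by auto
    next
      case 2 then have "z*w = z*cnj w" using q01 q10 pauli_ent by simp
      then show ?thesis by auto
    next
      case 3 then have "z*w = -(z*cnj w)" using q01 q10 pauli_ent by (simp add: algebra_simps)
      then have "z*(w + cnj w) = 0" by (simp add: algebra_simps)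
      then show ?thesis by (auto simp: add_eq_0_iff)
    next
      case 4 then show ?thesis using q01 pauli_ent by auto
    qed
  qed
  have \<psi>c: "\<psi> \<in> carrier_vec 2" using assms(3) unfolding is_state_def by simp
  define a where "a = \<psi> $ 0"
  define b where "b = \<psi> $ 1"
  have E1: "z*a + w*b = a" and E2: "cnj w * a - z*b = b"
    using mv2[OF Cc \<psi>c] assms(4) c00 c01 c10 c11 unfolding a_def b_def by simp_all
  have E2c: "w * cnj a - z * cnj b = cnj b"
  proof -
    have "cnj (cnj w * a - z*b) = cnj b" using E2 by simp
    then show ?thesis using zr by simp
  qed
  have "(cmod a)^2 + (cmod b)^2 = 1" using assms(3) unfolding is_state_def a_def b_def by (simp add: sum2)
  then have "complex_of_real ((cmod a)^2) + complex_of_real ((cmod b)^2) = 1"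
    by (metis of_real_1 of_real_add)
  then have N: "a * cnj a + b * cnj b = 1" unfolding complex_norm_square .
  have H1: "2*(a * cnj a) = 1 + z" using h1_aux[OF E1 E2c N] .
  have H4: "2*(b * cnj b) = 1 - z" using h4_aux[OF H1 N] .
  have H2: "2*(a * cnj b) = w"
  proof (cases "z = 1")
    case True
    then have "w * cnj w = 0" using nz by simp
    then have w0: "w = 0" by simp
    have "b * cnj b = 0" using H4 True by simp
    then have "b = 0" by simp
    then show ?thesis using w0 by simp
  next
    case False
    have "(1 - z) * (2*(a * cnj b)) = (1 - z) * w" using h2_aux[OF E1 H4] .
    then show ?thesis using False by simp
  qed
  have H3: "2*(b * cnj a) = cnj w"
  proof -
    have "cnj (2*(a * cnj b)) = cnj w" using H2 by simp
    then show ?thesis by (simp add: mult.commute)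
  qed
  define K where "K = ketbra \<psi>"
  have Kc: "K \<in> carrier_mat 2 2" unfolding K_def using \<psi>c by (rule kb_carrier)
  have k00: "K$$(0,0) = (1+z)/2" and k01: "K$$(0,1) = w/2" and k10: "K$$(1,0) = cnj w/2" and k11: "K$$(1,1) = (1-z)/2"
    unfolding K_def using kb_idx[OF \<psi>c] H1 H2 H3 H4 unfolding a_def b_def by (simp_all add: field_simps)
  define S where "S = E K"
  have Sc: "S \<in> carrier_mat 2 2" using assms(5) Kc unfolding S_def is_channel_def by blast
  have trS: "tr2 S = 1"
  proof -
    have "tr2 S = tr2 K" using assms(5) Kc unfolding S_def is_channel_def by blast
    also have "\<dots> = 1" unfolding tr2_def k00 k11 by (simp add: field_simps)
    finally show ?thesis .
  qed
  have psdS: "psd 2 S"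
  proof -
    have "psd (2*1) K" using psd_kb[OF \<psi>c] unfolding K_def by simp
    then have "psd (2*1) (ampl 1 E K)" using assms(5) unfolding is_channel_def by blast
    then show ?thesis using ampl1[OF assms(5) Kc] unfolding S_def by simp
  qed
  have apos: "0 \<le> S$$(0,0) * K $$ (0,0) + S$$(0,1) * K $$ (1,0) + S$$(1,0) * K $$ (0,1) + S$$(1,1) * K $$ (1,1)"
    using psd_use[OF psdS \<psi>c] unfolding K_def .
  obtain P where Pp: "is_pauli P" and Pc: "P \<in> carrier_mat 2 2"
    and r00: "(P*K*dag P)$$(0,0) = (1-z)/2" and r01: "(P*K*dag P)$$(0,1) = -w/2"
    and r10: "(P*K*dag P)$$(1,0) = -cnj w/2" and r11: "(P*K*dag P)$$(1,1) = (1+z)/2"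
  proof -
    from key consider "z = 0" | "cnj w = -w" | "cnj w = w" by blast
    then show ?thesis
    proof cases
      case 1
      show ?thesis
        apply (rule that[OF pauli_basic(3) pauli_carrier(3)])
        using conj2[OF pauli_carrier(3) Kc] pauli_ent k00 k01 k10 k11 1 by simp_all
    next
      case 2
      show ?thesis
        apply (rule that[OF pauli_basic(1) pauli_carrier(1)])
        using conj2[OF pauli_carrier(1) Kc] pauli_ent k00 k01 k10 k11 2 by simp_all
    next
      case 3
      show ?thesis
        apply (rule that[OF pauli_basic(2) pauli_carrier(2)])
        using conj2[OF pauli_carrier(2) Kc] pauli_ent k00 k01 k10 k11 3 by (simp_all add: ixi) (simp add: field_simps)
    qed
  qed
  define R where "R = P * K * dag P"
  have Rc: "R \<in> carrier_mat 2 2" unfolding R_def using Pc Kc dag_carrier[OF Pc] by simp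
  have R_kb: "R = ketbra (P *\<^sub>v \<psi>)" unfolding R_def K_def using kb_mult[OF Pc \<psi>c] by simp
  have bpos: "0 \<le> S$$(0,0) * R $$ (0,0) + S$$(0,1) * R $$ (1,0) + S$$(1,0) * R $$ (0,1) + S$$(1,1) * R $$ (1,1)"
    unfolding R_kb using psd_use[OF psdS] Pc \<psi>c by simp
  obtain p :: real where p: "0 \<le> p" "p \<le> 1" "twirl C S = complex_of_real (1 - p) \<cdot>\<^sub>m K + complex_of_real p \<cdot>\<^sub>m R"
    using core[OF Cc c00 c01 c10 c11 zr nz Kc k00 k01 k10 k11 Rc r00[folded R_def] r01[folded R_def]
        r10[folded R_def] r11[folded R_def] Sc trS apos bpos] by blast
  show ?thesis
    using Pp p unfolding S_def K_def R_def by blast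
qed

end
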